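(* Let $S=sgp^+\langle A\mid R\rangle$ with $A$ finite, let $L\subseteq A^+$, and suppose $(A,L)$ is a prefix-automatic structure for $S$. Let $e$ be a new symbol, $B=A\cup\{e\}$, $K=L\cup\{e\}$, and $S^1=sgp^+\langle A\cup\{e\}\mid R,\ ea=ae=a\ (a\in A),\ ee=e\rangle$. Then $(B,K)$ is a prefix-automatic structure for $S^1$.
   Context: $A^*$ is the free monoid on $A$ (empty word $\varepsilon$), $A^+=A^*\setminus\{\varepsilon\}$. $sgp^+\langle A\mid R\rangle$ denotes the semigroup $A^+$ modulo the congruence generated by $R$. A language is regular if accepted by a finite state automaton. Let $\$\notin A$, $A(2,\$)=(A\cup\{\$\})^2\setminus\{(\$,\$)\}$. For $\alpha,\beta\in A^*$, $(\alpha,\beta)\delta_A^R$ is the word over $A(2,\$)$ obtained by padding the shorter of $\alpha,\beta$ on the right with $\$$'s to equal length and reading the pairs of letters position by position. For a semigroup $S$ generated by finite $A$ with canonical epimorphism $\phi:A^+\to S$ and a regular $L\subseteq A^+$ with $\phi(L)=S$, write $\alpha=\beta$ if $\phi(\alpha)=\phi(\beta)$ (with $\alpha\varepsilon\equiv\alpha$), and for $a\in A\cup\{\varepsilon\}$ let $L_a^\$=\{(\alpha,\beta)\delta^R_A:\alpha,\beta\in L,\ \alpha a=\beta\}$. $(A,L)$ is an automatic structure if every $L_a^\$$ is regular; it is a prefix-automatic structure if moreover $\{(\alpha,\beta)\delta_A^R:\alpha\in L,\ \beta\in\mathrm{Pref}(L),\ \alpha=\beta\}$ is regular, $\mathrm{Pref}(L)$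 being the set of prefixes of words in $L$. For $S^1$ the map sends $e$ to the identity. *)

theory Defs
  imports Main
begin

definition plus :: "'a set \<Rightarrow> 'a list set" where
  "plus A = {w. w \<in> lists A \<and> w \<noteq> []}"

definition is_congruence :: "'a set \<Rightarrow> ('a list \<times> 'a list) set \<Rightarrow> bool" where
  "is_congruence A C \<longleftrightarrow> equiv (plus A) C \<and>
     (\<forall>u v w. (u, v) \<in> C \<longrightarrow> w \<in> plus A \<longrightarrow> (w @ u, w @ v) \<in> C \<and> (u @ w, v @ w) \<in> C)"

text \<open>The congruence on A^+ generated by R: the least congruence containing R.
  Two words alpha, beta of A^+ represent the same element of sgp^+<A|R> iff
  (alpha, beta) is in this relation.\<close>
definition cong_gen :: "'a set \<Rightarrow> ('a list \<times> 'a list) set \<Rightarrow> ('a list \<times> 'a list) set" where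
  "cong_gen A R = \<Inter> {C. is_congruence A C \<and> R \<subseteq> C}"

definition regular :: "'b list set \<Rightarrow> bool" where
  "regular L \<longleftrightarrow> (\<exists>(Q::nat set) q0 \<delta> F. finite Q \<and> q0 \<in> Q \<and> (\<forall>q\<in>Q. \<forall>x. \<delta> q x \<in> Q)
      \<and> F \<subseteq> Q \<and> L = {w. foldl \<delta> q0 w \<in> F})"

text \<open>Padded convolution (alpha,beta)delta^R_A; None plays the role of the padding symbol \$.\<close>
definition conv :: "'a list \<Rightarrow> 'a list \<Rightarrow> ('a option \<times> 'a option) list" where
  "conv \<alpha> \<beta> = (let n = max (length \<alpha>) (length \<beta>) in
     zip (map Some \<alpha> @ replicate (n - length \<alpha>) None) (map Some \<beta> @ replicate (n - length \<beta>) None))"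

definition Pref :: "'a list set \<Rightarrow> 'a list set" where
  "Pref L = {u. \<exists>v. u @ v \<in> L}"

definition automatic_structure :: "'a set \<Rightarrow> ('a list \<times> 'a list) set \<Rightarrow> 'a list set \<Rightarrow> bool" where
  "automatic_structure A R L \<longleftrightarrow>
     finite A \<and> L \<subseteq> plus A \<and> regular L \<and>
     (\<forall>w\<in>plus A. \<exists>u\<in>L. (u, w) \<in> cong_gen A R) \<and>
     regular {conv \<alpha> \<beta> | \<alpha> \<beta>. \<alpha> \<in> L \<and> \<beta> \<in> L \<and> (\<alpha>, \<beta>) \<in> cong_gen A R} \<and>
     (\<forall>a\<in>A. regular {conv \<alpha> \<beta> | \<alpha> \<beta>. \<alpha> \<in> L \<and> \<beta> \<in> L \<and> (\<alpha> @ [a], \<beta>) \<in> cong_gen A R})"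

definition prefix_automatic_structure :: "'a set \<Rightarrow> ('a list \<times> 'a list) set \<Rightarrow> 'a list set \<Rightarrow> bool" where
  "prefix_automatic_structure A R L \<longleftrightarrow> automatic_structure A R L \<and>
     regular {conv \<alpha> \<beta> | \<alpha> \<beta>. \<alpha> \<in> L \<and> \<beta> \<in> Pref L \<and> (\<alpha>, \<beta>) \<in> cong_gen A R}"

end

theory Submission
  imports Defs
begin


lemma congD:
  assumes "is_congruence A C"
  shows "C \<subseteq> plus A \<times> plus A" "\<And>u. u \<in> plus A \<Longrightarrow> (u,u) \<in> C"
    "\<And>u v. (u,v) \<in> C \<Longrightarrow> (v,u) \<in> C"
    "\<And>u v w. (u,v) \<in> C \<Longrightarrow> (v,w) \<in> C \<Longrightarrow> (u,w) \<in> C"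
    "\<And>u v w. (u,v) \<in> C \<Longrightarrow> w \<in> plus A \<Longrightarrow> (w @ u, w @ v) \<in> C"
    "\<And>u v w. (u,v) \<in> C \<Longrightarrow> w \<in> plus A \<Longrightarrow> (u @ w, v @ w) \<in> C"
proof -
  have eq: "equiv (plus A) C" and m: "\<forall>u v w. (u, v) \<in> C \<longrightarrow> w \<in> plus A \<longrightarrow> (w @ u, w @ v) \<in> C \<and> (u @ w, v @ w) \<in> C"
    using assms unfolding is_congruence_def by auto
  show "C \<subseteq> plus A \<times> plus A" using eq by (simp add: equiv_def)
  show "\<And>u. u \<in> plus A \<Longrightarrow> (u,u) \<in> C" using eq by (simp add: equiv_def refl_on_def)
  show "\<And>u v. (u,v) \<in> C \<Longrightarrow> (v,u) \<in> C" using eq by (meson equiv_def symD)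
  show "\<And>u v w. (u,v) \<in> C \<Longrightarrow> (v,w) \<in> C \<Longrightarrow> (u,w) \<in> C" using eq by (meson equiv_def transD)
  show "\<And>u v w. (u,v) \<in> C \<Longrightarrow> w \<in> plus A \<Longrightarrow> (w @ u, w @ v) \<in> C" using m by simp
  show "\<And>u v w. (u,v) \<in> C \<Longrightarrow> w \<in> plus A \<Longrightarrow> (u @ w, v @ w) \<in> C" using m by simp
qed

lemma congI:
  assumes "C \<subseteq> plus A \<times> plus A" "\<And>u. u \<in> plus A \<Longrightarrow> (u,u) \<in> C"
    "\<And>u v. (u,v) \<in> C \<Longrightarrow> (v,u) \<in> C"
    "\<And>u v w. (u,v) \<in> C \<Longrightarrow> (v,w) \<in> C \<Longrightarrow> (u,w) \<in> C"
    "\<And>u v w. (u,v) \<in> C \<Longrightarrow> w \<in> plus A \<Longrightarrow> (w @ u, w @ v) \<in> C"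
    "\<And>u v w. (u,v) \<in> C \<Longrightarrow> w \<in> plus A \<Longrightarrow> (u @ w, v @ w) \<in> C"
  shows "is_congruence A C"
proof -
  have "equiv (plus A) C"
  proof (rule equivI)
    show "C \<subseteq> plus A \<times> plus A" by (rule assms(1))
    show "refl_on (plus A) C" unfolding refl_on_def using assms(2) by blast
    show "sym C" by (rule symI) (rule assms(3))
    show "trans C" by (rule transI) (rule assms(4))
  qed
  then show ?thesis unfolding is_congruence_def using assms(5,6) by blast
qed

lemma plus_append: "u \<in> plus A \<Longrightarrow> w \<in> plus A \<Longrightarrow> u @ w \<in> plus A"
  by (auto simp: plus_def)

lemma cong_gen_is_cong:
  assumes "R \<subseteq> plus A \<times> plus A"
  shows "is_congruence A (cong_gen A R)"
proof -
  have full: "is_congruence A (plus A \<times> plus A)"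
    by (rule congI) (auto intro: plus_append)
  have sub: "cong_gen A R \<subseteq> plus A \<times> plus A"
    unfolding cong_gen_def using full assms by blast
  show ?thesis
  proof (rule congI)
    show "cong_gen A R \<subseteq> plus A \<times> plus A" using sub .
  next
    fix u assume u: "u \<in> plus A"
    show "(u,u) \<in> cong_gen A R" unfolding cong_gen_def
    proof (rule InterI)
      fix C assume "C \<in> {C. is_congruence A C \<and> R \<subseteq> C}"
      then show "(u,u) \<in> C" using congD(2) u by blast
    qed
  next
    fix u v assume uv: "(u,v) \<in> cong_gen A R"
    show "(v,u) \<in> cong_gen A R" unfolding cong_gen_def
    proof (rule InterI)
      fix C assume C: "C \<in> {C. is_congruence A C \<and> R \<subseteq> C}"
      then have "(u,v) \<in> C" using uv unfolding cong_gen_def by blast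
      then show "(v,u) \<in> C" using congD(3) C by blast
    qed
  next
    fix u v w assume uv: "(u,v) \<in> cong_gen A R" "(v,w) \<in> cong_gen A R"
    show "(u,w) \<in> cong_gen A R" unfolding cong_gen_def
    proof (rule InterI)
      fix C assume C: "C \<in> {C. is_congruence A C \<and> R \<subseteq> C}"
      then have "(u,v) \<in> C" "(v,w) \<in> C" using uv unfolding cong_gen_def by blast+
      then show "(u,w) \<in> C" using congD(4) C by blast
    qed
  next
    fix u v w assume uv: "(u,v) \<in> cong_gen A R" and w: "w \<in> plus A"
    show "(w@u,w@v) \<in> cong_gen A R" unfolding cong_gen_def
    proof (rule InterI)
      fix C assume C: "C \<in> {C. is_congruence A C \<and> R \<subseteq> C}"
      then have "(u,v) \<in> C" using uv unfolding cong_gen_def by blast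
      then show "(w@u,w@v) \<in> C" using congD(5) C w by blast
    qed
  next
    fix u v w assume uv: "(u,v) \<in> cong_gen A R" and w: "w \<in> plus A"
    show "(u@w,v@w) \<in> cong_gen A R" unfolding cong_gen_def
    proof (rule InterI)
      fix C assume C: "C \<in> {C. is_congruence A C \<and> R \<subseteq> C}"
      then have "(u,v) \<in> C" using uv unfolding cong_gen_def by blast
      then show "(u@w,v@w) \<in> C" using congD(6) C w by blast
    qed
  qed
qed

lemma cong_gen_min: "is_congruence A C \<Longrightarrow> R \<subseteq> C \<Longrightarrow> cong_gen A R \<subseteq> C"
  unfolding cong_gen_def by blast

lemma cong_gen_R: "R \<subseteq> cong_gen A R"
  unfolding cong_gen_def by blast

definition E :: "'a \<Rightarrow> 'a list \<Rightarrow> 'a list" where "E e u = filter (\<lambda>x. x \<noteq> e) u"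

lemma E_A: "e \<notin> A \<Longrightarrow> u \<in> lists A \<Longrightarrow> E e u = u"
  unfolding E_def by (induction u) auto

lemma E_lists: "u \<in> lists (insert e A) \<Longrightarrow> E e u \<in> lists A"
  unfolding E_def by (induction u) auto

locale setting =
  fixes A :: "'a set" and R :: "('a list \<times> 'a list) set" and e :: 'a
  assumes R: "R \<subseteq> plus A \<times> plus A" and eA: "e \<notin> A"
begin

abbreviation "B \<equiv> insert e A"
abbreviation "R' \<equiv> R \<union> {([e, a], [a]) | a. a \<in> A} \<union> {([a, e], [a]) | a. a \<in> A} \<union> {([e, e], [e])}"
abbreviation "CA \<equiv> cong_gen A R"
abbreviation "CB \<equiv> cong_gen B R'"

lemma plusA_B: "plus A \<subseteq> plus B" by (auto simp: plus_def)

lemma R'sub: "R' \<subseteq> plus B \<times> plus B"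
  using R by (auto simp: plus_def)

lemma CA: "is_congruence A CA" using cong_gen_is_cong[OF R] .
lemma CB: "is_congruence B CB" using cong_gen_is_cong[OF R'sub] .

definition C where "C = {(u,v). u \<in> plus B \<and> v \<in> plus B \<and>
   ((E e u = [] \<and> E e v = []) \<or> (E e u, E e v) \<in> CA)}"

lemma E_app: "E e (u @ v) = E e u @ E e v" by (simp add: E_def)

lemma C_cong: "is_congruence B C"
proof -
  have subA: "CA \<subseteq> plus A \<times> plus A" using congD(1)[OF CA] .
  have Eplus: "u \<in> plus B \<Longrightarrow> E e u \<noteq> [] \<Longrightarrow> E e u \<in> plus A" for u
    using E_lists[of u e A] by (auto simp: plus_def)
  show ?thesis
  proof (rule congI)
    show "C \<subseteq> plus B \<times> plus B" by (auto simp: C_def)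
  next
    fix u assume "u \<in> plus B" then show "(u,u) \<in> C"
      using Eplus[of u] congD(2)[OF CA] by (auto simp: C_def)
  next
    fix u v assume "(u,v) \<in> C" then show "(v,u) \<in> C"
      using congD(3)[OF CA] by (auto simp: C_def)
  next
    fix u v w assume "(u,v) \<in> C" "(v,w) \<in> C" then show "(u,w) \<in> C"
      using congD(4)[OF CA] subA by (auto simp: C_def plus_def)
  next
    fix u v w assume uv: "(u,v) \<in> C" and w: "w \<in> plus B"
    show "(w @ u, w @ v) \<in> C"
    proof (cases "E e w = []")
      case True then show ?thesis using uv w by (auto simp: C_def E_app intro: plus_append)
    next
      case False
      then have wA: "E e w \<in> plus A" using Eplus w by auto
      show ?thesis using uv w congD(5)[OF CA _ wA] congD(2)[OF CA wA]
        by (auto simp: C_def E_app intro: plus_append)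
    qed
  next
    fix u v w assume uv: "(u,v) \<in> C" and w: "w \<in> plus B"
    show "(u @ w, v @ w) \<in> C"
    proof (cases "E e w = []")
      case True then show ?thesis using uv w by (auto simp: C_def E_app intro: plus_append)
    next
      case False
      then have wA: "E e w \<in> plus A" using Eplus w by auto
      show ?thesis using uv w congD(6)[OF CA _ wA] congD(2)[OF CA wA]
        by (auto simp: C_def E_app intro: plus_append)
    qed
  qed
qed

lemma R'_C: "R' \<subseteq> C"
proof -
  have "R \<subseteq> C"
  proof
    fix p assume p: "p \<in> R"
    obtain u v where [simp]: "p = (u,v)" by (cases p)
    have uv: "u \<in> plus A" "v \<in> plus A" using p R by auto
    then have "E e u = u" "E e v = v" using E_A[OF eA] by (auto simp: plus_def)
    then show "p \<in> C" using p cong_gen_R[of R A] uv plusA_B by (auto simp: C_def)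
  qed
  moreover have "([e,a],[a]) \<in> C" "([a,e],[a]) \<in> C" if "a \<in> A" for a
    using that eA congD(2)[OF CA, of "[a]"] by (auto simp: C_def E_def plus_def)
  moreover have "([e,e],[e]) \<in> C" by (auto simp: C_def E_def plus_def)
  ultimately show ?thesis by blast
qed

lemma CB_C: "CB \<subseteq> C" using cong_gen_min[OF C_cong R'_C] .

lemma CA_CB: "CA \<subseteq> CB"
proof -
  let ?D = "CB \<inter> (plus A \<times> plus A)"
  have "is_congruence A ?D"
  proof (rule congI)
    show "?D \<subseteq> plus A \<times> plus A" by blast
    show "(u,u) \<in> ?D" if "u \<in> plus A" for u using that congD(2)[OF CB] plusA_B by blast
    show "(v,u) \<in> ?D" if "(u,v) \<in> ?D" for u v using that congD(3)[OF CB] by blast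
    show "(u,w) \<in> ?D" if "(u,v) \<in> ?D" "(v,w) \<in> ?D" for u v w using that congD(4)[OF CB] by blast
    show "(w@u,w@v) \<in> ?D" if "(u,v) \<in> ?D" "w \<in> plus A" for u v w
      using that congD(5)[OF CB, of u v w] plusA_B plus_append[of w A] by blast
    show "(u@w,v@w) \<in> ?D" if "(u,v) \<in> ?D" "w \<in> plus A" for u v w
      using that congD(6)[OF CB, of u v w] plusA_B plus_append[of _ A w] by blast
  qed
  moreover have "R \<subseteq> ?D" using cong_gen_R[of R' B] R by blast
  ultimately show ?thesis using cong_gen_min by blast
qed

lemma xe_e: "x \<in> B \<Longrightarrow> ([e,x],[x]) \<in> CB" "x \<in> B \<Longrightarrow> ([x,e],[x]) \<in> CB"
  using cong_gen_R[of R' B] by auto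

lemma x_es: "x \<in> B \<Longrightarrow> set u \<subseteq> {e} \<Longrightarrow> (x # u, [x]) \<in> CB"
proof (induction u)
  case Nil then show ?case using congD(2)[OF CB, of "[x]"] by (auto simp: plus_def)
next
  case (Cons y u)
  then have y: "y = e" by auto
  have "(x # e # u, x # u) \<in> CB"
  proof (cases "u = []")
    case True then show ?thesis using xe_e(2)[OF Cons.prems(1)] by simp
  next
    case False
    have "u \<in> plus B" using Cons.prems False by (auto simp: plus_def)
    from congD(6)[OF CB xe_e(2)[OF Cons.prems(1)] this] show ?thesis by simp
  qed
  then show ?case using Cons congD(4)[OF CB] y by auto
qed

lemma to_E: "u \<in> plus B \<Longrightarrow> E e u \<noteq> [] \<Longrightarrow> (u, E e u) \<in> CB"
proof (induction u)
  case Nil then show ?case by (simp add: plus_def)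
next
  case (Cons x u)
  show ?case
  proof (cases "x = e")
    case True
    then have Eu: "E e u \<noteq> []" "E e (x#u) = E e u" using Cons.prems by (auto simp: E_def)
    then obtain y u' where u: "u = y # u'" by (cases u) (auto simp: E_def)
    have uB: "u \<in> plus B" using Cons.prems u by (auto simp: plus_def)
    have yB: "y \<in> B" using uB u by (auto simp: plus_def)
    have 1: "(e # y # u', y # u') \<in> CB"
    proof (cases "u' = []")
      case True then show ?thesis using xe_e(1)[OF yB] by simp
    next
      case False
      have "u' \<in> plus B" using uB u False by (auto simp: plus_def)
      from congD(6)[OF CB xe_e(1)[OF yB] this] show ?thesis by simp
    qed
    have "(u, E e u) \<in> CB" using Cons.IH uB Eu by simp
    then show ?thesis using 1 u True Eu congD(4)[OF CB] by auto
  next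
    case False
    have xB: "x \<in> B" using Cons.prems by (auto simp: plus_def)
    show ?thesis
    proof (cases "E e u = []")
      case True
      then have "set u \<subseteq> {e}" unfolding E_def by (auto simp: filter_empty_conv)
      then show ?thesis using x_es[OF xB] False True by (simp add: E_def)
    next
      case F2: False
      have uB: "u \<in> plus B" using Cons.prems F2 by (auto simp: plus_def E_def)
      have "(u, E e u) \<in> CB" using Cons.IH uB F2 by simp
      from congD(5)[OF CB this, of "[x]"] xB False show ?thesis
        by (simp add: E_def plus_def)
    qed
  qed
qed

lemma to_e: "u \<in> plus B \<Longrightarrow> E e u = [] \<Longrightarrow> (u, [e]) \<in> CB"
proof -
  assume u: "u \<in> plus B" "E e u = []"
  then obtain x u' where "u = x # u'" by (cases u) (auto simp: plus_def)
  moreover have "set u \<subseteq> {e}" using u(2) unfolding E_def by (auto simp: filter_empty_conv)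
  ultimately show ?thesis using x_es[of e u'] by auto
qed

lemma CB_char: "(u,v) \<in> CB \<longleftrightarrow> (u,v) \<in> C"
proof
  assume "(u,v) \<in> CB" then show "(u,v) \<in> C" using CB_C by blast
next
  assume uv: "(u,v) \<in> C"
  show "(u,v) \<in> CB"
  proof (cases "E e u = [] \<and> E e v = []")
    case True
    have "u \<in> plus B" "v \<in> plus B" using uv by (auto simp: C_def)
    then have "(u,[e]) \<in> CB" "(v,[e]) \<in> CB" using to_e True by auto
    then show ?thesis using congD(3,4)[OF CB] by blast
  next
    case False
    then have "(E e u, E e v) \<in> CA" using uv by (auto simp: C_def)
    then have 1: "(E e u, E e v) \<in> CB" using CA_CB by blast
    have "E e u \<noteq> []" "E e v \<noteq> []" using congD(1)[OF CA] \<open>(E e u, E e v) \<in> CA\<close>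
      by (auto simp: plus_def)
    moreover have "u \<in> plus B" "v \<in> plus B" using uv by (auto simp: C_def)
    ultimately have "(u, E e u) \<in> CB" "(v, E e v) \<in> CB" using to_E by auto
    then show ?thesis using 1 congD(3,4)[OF CB] by blast
  qed
qed

end


lemma regular_generic:
  fixes Q :: "'s set" and \<delta> :: "'s \<Rightarrow> 'b \<Rightarrow> 's"
  assumes Q: "finite Q" "q0 \<in> Q" "\<forall>q\<in>Q. \<forall>x. \<delta> q x \<in> Q"
  shows "regular {w. foldl \<delta> q0 w \<in> F}"
proof -
  obtain f where f: "bij_betw f Q {0..<card Q}" using ex_bij_betw_finite_nat[OF Q(1)] by blast
  define g where "g = inv_into Q f"
  have fQ: "f ` Q = {0..<card Q}" using f by (simp add: bij_betw_def)
  have inj: "inj_on f Q" using f by (simp add: bij_betw_def)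
  have gf: "q \<in> Q \<Longrightarrow> g (f q) = q" for q using inj by (simp add: g_def)
  define \<delta>' where "\<delta>' n x = (if n \<in> f ` Q then f (\<delta> (g n) x) else n)" for n x
  have inQ: "q \<in> Q \<Longrightarrow> foldl \<delta> q w \<in> Q" for q w
    by (induction w arbitrary: q) (use Q(3) in auto)
  have sim: "q \<in> Q \<Longrightarrow> foldl \<delta>' (f q) w = f (foldl \<delta> q w)" for q w
  proof (induction w arbitrary: q)
    case Nil then show ?case by simp
  next
    case (Cons x w)
    have "\<delta>' (f q) x = f (\<delta> q x)" using Cons.prems gf by (simp add: \<delta>'_def)
    then show ?case using Cons Q(3) by simp
  qed
  have "{w. foldl \<delta> q0 w \<in> F} = {w. foldl \<delta>' (f q0) w \<in> f ` (F \<inter> Q)}"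
  proof -
    have "foldl \<delta> q0 w \<in> F \<longleftrightarrow> f (foldl \<delta> q0 w) \<in> f ` (F \<inter> Q)" for w
      using inQ[OF Q(2), of w] inj by (auto dest: inj_onD)
    then show ?thesis using sim[OF Q(2)] by auto
  qed
  moreover have cl: "\<forall>q\<in>{0..<card Q}. \<forall>x. \<delta>' q x \<in> {0..<card Q}"
  proof (intro ballI allI)
    fix q x assume "q \<in> {0..<card Q}"
    then obtain q' where q': "q' \<in> Q" "q = f q'" using fQ by blast
    then have "\<delta>' q x = f (\<delta> q' x)" using gf by (simp add: \<delta>'_def)
    moreover have "\<delta> q' x \<in> Q" using Q(3) q'(1) by blast
    ultimately show "\<delta>' q x \<in> {0..<card Q}" using fQ by (metis imageI)
  qed
  moreover have "f q0 \<in> {0..<card Q}" using fQ Q(2) by blast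
  moreover have "f ` (F \<inter> Q) \<subseteq> {0..<card Q}" using fQ by blast
  ultimately show ?thesis unfolding regular_def
    by (intro exI[of _ "{0..<card Q}"] exI[of _ "f q0"] exI[of _ \<delta>'] exI[of _ "f ` (F \<inter> Q)"] conjI) auto
qed

definition quot :: "'b list set \<Rightarrow> 'b list \<Rightarrow> 'b list set" where
  "quot L u = {w. u @ w \<in> L}"

lemma regular_iff: "regular L \<longleftrightarrow> finite (range (quot L))"
proof
  assume "regular L"
  then obtain Q :: "nat set" and q0 \<delta> F where Q: "finite Q" "q0 \<in> Q" "\<forall>q\<in>Q. \<forall>x. \<delta> q x \<in> Q"
    and L: "L = {w. foldl \<delta> q0 w \<in> F}" unfolding regular_def by blast
  have inQ: "q \<in> Q \<Longrightarrow> foldl \<delta> q w \<in> Q" for q w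
    by (induction w arbitrary: q) (use Q(3) in auto)
  have "range (quot L) \<subseteq> (\<lambda>q. {w. foldl \<delta> q w \<in> F}) ` Q"
    using inQ[OF Q(2)] by (auto simp: quot_def L)
  then show "finite (range (quot L))" using Q(1) finite_subset by blast
next
  assume fin: "finite (range (quot L))"
  define \<delta> where "\<delta> S x = {w. x # w \<in> S}" for S :: "'a list set" and x
  have step: "foldl \<delta> (quot L u) w = quot L (u @ w)" for u w
  proof (induction w arbitrary: u)
    case Nil then show ?case by simp
  next
    case (Cons a w)
    have "\<delta> (quot L u) a = quot L (u @ [a])" by (auto simp: \<delta>_def quot_def)
    then show ?case using Cons by simp
  qed
  have cl: "\<forall>q\<in>range (quot L). \<forall>x. \<delta> q x \<in> range (quot L)"
    using step[of _ "[_]"] by auto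
  have q0: "quot L [] = L" by (simp add: quot_def)
  have st0: "foldl \<delta> L w = quot L w" for w using step[of "[]" w] q0 by simp
  have "L = {w. foldl \<delta> L w \<in> {S. [] \<in> S}}"
    by (auto simp: st0 quot_def)
  moreover have "L \<in> range (quot L)" using q0 by (metis rangeI)
  ultimately show "regular L" using regular_generic[OF fin _ cl, of L] by metis
qed

lemma quot_quot: "quot (quot L v) u = quot L (v @ u)" by (simp add: quot_def)

lemma reg_quot: "regular L \<Longrightarrow> regular (quot L v)"
  unfolding regular_iff quot_quot
  by (rule finite_subset[of _ "range (quot L)"]) auto

lemma reg_Un: "regular L1 \<Longrightarrow> regular L2 \<Longrightarrow> regular (L1 \<union> L2)"
  unfolding regular_iff
proof -
  assume "finite (range (quot L1))" "finite (range (quot L2))"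
  moreover have "range (quot (L1 \<union> L2)) \<subseteq> (\<lambda>(X,Y). X \<union> Y) ` (range (quot L1) \<times> range (quot L2))"
  proof
    fix X assume "X \<in> range (quot (L1 \<union> L2))"
    then obtain u where X: "X = quot (L1 \<union> L2) u" by blast
    have "X = (\<lambda>(X,Y). X \<union> Y) (quot L1 u, quot L2 u)" by (auto simp: X quot_def)
    then show "X \<in> (\<lambda>(X,Y). X \<union> Y) ` (range (quot L1) \<times> range (quot L2))" by blast
  qed
  ultimately show "finite (range (quot (L1 \<union> L2)))"
    using finite_subset by (metis finite_SigmaI finite_imageI)
qed

lemma reg_empty: "regular {}"
  unfolding regular_iff by (rule finite_subset[of _ "{{}}"]) (auto simp: quot_def)

lemma reg_single: "regular {w0}"
  unfolding regular_iff
proof (rule finite_subset[of _ "insert {} ((\<lambda>k. {drop k w0}) ` {..length w0})"])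
  show "range (quot {w0}) \<subseteq> insert {} ((\<lambda>k. {drop k w0}) ` {..length w0})"
  proof
    fix X assume "X \<in> range (quot {w0})"
    then obtain u where X: "X = quot {w0} u" by auto
    show "X \<in> insert {} ((\<lambda>k. {drop k w0}) ` {..length w0})"
    proof (cases "\<exists>w. u @ w = w0")
      case True
      then obtain w where w: "u @ w = w0" by auto
      then have "X = {drop (length u) w0}" by (auto simp: X quot_def)
      then show ?thesis using w by auto
    next
      case False then have "X = {}" by (auto simp: X quot_def)
      then show ?thesis by simp
    qed
  qed
qed simp

lemma reg_insert: "regular L \<Longrightarrow> regular (insert w L)"
  using reg_Un[OF reg_single[of w]] by simp

lemma reg_UN: "finite I \<Longrightarrow> (\<And>i. i \<in> I \<Longrightarrow> regular (f i)) \<Longrightarrow> regular (\<Union>i\<in>I. f i)"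
  by (induction I rule: finite_induct) (auto simp: reg_empty intro: reg_Un)

lemma reg_cons: "regular T \<Longrightarrow> regular ((#) c ` T)"
  unfolding regular_iff
proof -
  assume fin: "finite (range (quot T))"
  have "range (quot ((#) c ` T)) \<subseteq> insert ((#) c ` T) (insert {} (range (quot T)))"
  proof
    fix X assume "X \<in> range (quot ((#) c ` T))"
    then obtain u where X: "X = quot ((#) c ` T) u" by auto
    show "X \<in> insert ((#) c ` T) (insert {} (range (quot T)))"
    proof (cases u)
      case Nil then show ?thesis by (simp add: X quot_def)
    next
      case (Cons y u')
      show ?thesis
      proof (cases "y = c")
        case True then have "X = quot T u'" using Cons by (auto simp: X quot_def)
        then show ?thesis by auto
      next
        case False then have "X = {}" using Cons by (auto simp: X quot_def)
        then show ?thesis by auto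
      qed
    qed
  qed
  then show "finite (range (quot ((#) c ` T)))" using fin finite_subset by blast
qed

lemma reg_map: assumes h: "inj h" and T: "regular T" shows "regular (map h ` T)"
proof -
  have img: "map h ` T = {w. w \<in> lists (range h) \<and> map (inv h) w \<in> T}"
  proof (intro set_eqI iffI)
    fix w assume "w \<in> map h ` T" then show "w \<in> {w. w \<in> lists (range h) \<and> map (inv h) w \<in> T}"
      using h by (auto simp: map_idI)
  next
    fix w assume w: "w \<in> {w. w \<in> lists (range h) \<and> map (inv h) w \<in> T}"
    have wl: "w \<in> lists (range h)" using w by simp
    then have "map h (map (inv h) w) = w" by (induction w) (auto simp: inv_f_f[OF h])
    then show "w \<in> map h ` T" using w by (metis (mono_tags, lifting) image_eqI mem_Collect_eq)
  qed
  have "range (quot (map h ` T)) \<subseteq> insert {} ((\<lambda>X. {w. w \<in> lists (range h) \<and> map (inv h) w \<in> X}) ` range (quot T))"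
  proof
    fix X assume "X \<in> range (quot (map h ` T))"
    then obtain u where X: "X = quot (map h ` T) u" by auto
    show "X \<in> insert {} ((\<lambda>X. {w. w \<in> lists (range h) \<and> map (inv h) w \<in> X}) ` range (quot T))"
    proof (cases "u \<in> lists (range h)")
      case True
      then have "X = {w. w \<in> lists (range h) \<and> map (inv h) w \<in> quot T (map (inv h) u)}"
        by (auto simp: X quot_def img)
      then show ?thesis by auto
    next
      case False then have "X = {}" by (auto simp: X quot_def img)
      then show ?thesis by auto
    qed
  qed
  then show ?thesis using T unfolding regular_iff by (meson finite_imageI finite_insert finite_subset)
qed

fun conv' :: "'a list \<Rightarrow> 'a list \<Rightarrow> ('a option \<times> 'a option) list" where
  "conv' [] [] = []"
| "conv' (a # as) [] = (Some a, None) # conv' as []"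
| "conv' [] (b # bs) = (None, Some b) # conv' [] bs"
| "conv' (a # as) (b # bs) = (Some a, Some b) # conv' as bs"

lemma conv_eq: "conv x y = conv' x y"
proof (induction x y rule: conv'.induct)
  case 1 then show ?case by (simp add: conv_def)
next
  case (2 a as) then show ?case by (simp add: conv_def Let_def)
next
  case (3 b bs) then show ?case by (simp add: conv_def Let_def)
next
  case (4 a as b bs) then show ?case by (simp add: conv_def Let_def)
qed

lemma conv'_Nil1: "conv' [] w = map (\<lambda>x. (None, Some x)) w"
  by (induction w) auto

lemma conv'_app: "conv' \<alpha> (u @ w) = conv' (take (length u) \<alpha>) u @ conv' (drop (length u) \<alpha>) w"
proof (induction u arbitrary: \<alpha>)
  case Nil
  have "conv' (take 0 \<alpha>) [] = []" by simp
  then show ?case by simp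
next
  case (Cons x u)
  then show ?case by (cases \<alpha>) (auto simp: conv'_Nil1)
qed

lemma conv'_fst: "map fst (conv' a b) = map Some a @ replicate (length b - length a) None"
  by (induction a b rule: conv'.induct) auto
lemma conv'_snd: "map snd (conv' a b) = map Some b @ replicate (length a - length b) None"
  by (induction a b rule: conv'.induct) auto

lemma tw: "map the (takeWhile (\<lambda>x. x \<noteq> None) (map Some a @ replicate k None)) = a"
  by (induction a) (cases k; auto)+

lemma conv_inj: "conv a b = conv a' b' \<Longrightarrow> a = a' \<and> b = b'"
  unfolding conv_eq
  by (metis conv'_fst conv'_snd tw)

lemma reg_fixfst:
  assumes M: "regular M" shows "regular {\<beta>. conv \<alpha>0 \<beta> \<in> M}"
proof -
  let ?n = "length \<alpha>0"
  let ?T = "{\<beta>. conv \<alpha>0 \<beta> \<in> M}"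
  have "range (quot ?T) \<subseteq> (\<lambda>(k,X). {w. conv (drop k \<alpha>0) w \<in> X}) ` ({..?n} \<times> range (quot M))"
  proof
    fix X assume "X \<in> range (quot ?T)"
    then obtain u where X: "X = quot ?T u" by auto
    let ?k = "min (length u) ?n"
    have d: "drop (length u) \<alpha>0 = drop ?k \<alpha>0" by (simp add: min_def)
    have "X = {w. conv (drop ?k \<alpha>0) w \<in> quot M (conv (take (length u) \<alpha>0) u)}"
      by (auto simp: X quot_def conv_eq conv'_app d[symmetric])
    then show "X \<in> (\<lambda>(k,X). {w. conv (drop k \<alpha>0) w \<in> X}) ` ({..?n} \<times> range (quot M))"
      by (intro image_eqI[of _ _ "(?k, quot M (conv (take (length u) \<alpha>0) u))"]) auto
  qed
  then show ?thesis using M unfolding regular_iff by (meson finite_SigmaI finite_atMost finite_imageI finite_subset)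
qed

lemma conv_e: "conv [e] (b # \<beta>) = (Some e, Some b) # map (\<lambda>x. (None, Some x)) \<beta>"
  by (simp add: conv_eq conv'_Nil1)

lemma reg_conv_e:
  assumes T: "regular T" and A: "finite A" and sub: "T \<subseteq> plus A"
  shows "regular {conv [e] \<beta> | \<beta>. \<beta> \<in> T}"
proof -
  have inj: "inj (\<lambda>x::'a. (None::'a option, Some x))" by (auto simp: inj_def)
  have "{conv [e] \<beta> | \<beta>. \<beta> \<in> T} =
      (\<Union>b\<in>A. (#) (Some e, Some b) ` (map (\<lambda>x. (None, Some x)) ` quot T [b]))"
  proof (intro set_eqI iffI)
    fix w assume "w \<in> {conv [e] \<beta> | \<beta>. \<beta> \<in> T}"
    then obtain \<beta> where b: "\<beta> \<in> T" "w = conv [e] \<beta>" by auto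
    then obtain b \<beta>' where "\<beta> = b # \<beta>'" "b \<in> A" using sub by (cases \<beta>) (auto simp: plus_def)
    then show "w \<in> (\<Union>b\<in>A. (#) (Some e, Some b) ` (map (\<lambda>x. (None, Some x)) ` quot T [b]))"
      using b by (auto simp: conv_e quot_def)
  next
    fix w assume "w \<in> (\<Union>b\<in>A. (#) (Some e, Some b) ` (map (\<lambda>x. (None, Some x)) ` quot T [b]))"
    then show "w \<in> {conv [e] \<beta> | \<beta>. \<beta> \<in> T}"
      by (auto simp: conv_e quot_def) (metis conv_e)
  qed
  moreover have "regular (\<Union>b\<in>A. (#) (Some e, Some b) ` (map (\<lambda>x. (None, Some x)) ` quot T [b]))"
    using A by (intro reg_UN reg_cons reg_map[OF inj] reg_quot T)
  ultimately show ?thesis by simp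
qed



context setting begin

lemma CB_iff: "(u,v) \<in> CB \<longleftrightarrow> u \<in> plus B \<and> v \<in> plus B \<and>
   ((E e u = [] \<and> E e v = []) \<or> (E e u, E e v) \<in> CA)"
  unfolding CB_char by (simp add: C_def)

lemma CA_plus: "(u,v) \<in> CA \<Longrightarrow> u \<in> plus A \<and> v \<in> plus A"
  using congD(1)[OF CA] by blast

lemma EA': "u \<in> plus A \<Longrightarrow> E e u = u"
  using E_A[OF eA] by (auto simp: plus_def)

lemma f_i: "\<alpha> \<in> plus A \<Longrightarrow> \<beta> \<in> plus A \<Longrightarrow> (\<alpha>,\<beta>) \<in> CB \<longleftrightarrow> (\<alpha>,\<beta>) \<in> CA"
  using CB_iff[of \<alpha> \<beta>] EA'[of \<alpha>] EA'[of \<beta>] plusA_B CA_CB by (auto simp: plus_def)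

lemma f_ii: "\<beta> \<in> lists A \<Longrightarrow> ([e],\<beta>) \<notin> CB \<and> (\<beta>,[e]) \<notin> CB"
proof -
  assume b: "\<beta> \<in> lists A"
  have "E e [e] = []" by (simp add: E_def)
  moreover have "E e \<beta> = \<beta>" using E_A[OF eA b] .
  ultimately show ?thesis using CB_iff[of "[e]" \<beta>] CB_iff[of \<beta> "[e]"] CA_plus
    by (auto simp: plus_def)
qed

lemma f_iii: "a \<in> A \<Longrightarrow> \<beta> \<in> plus A \<Longrightarrow> ([e,a],\<beta>) \<in> CB \<longleftrightarrow> ([a],\<beta>) \<in> CA"
proof -
  assume a: "a \<in> A" and b: "\<beta> \<in> plus A"
  have "E e [e,a] = [a]" using a eA by (auto simp: E_def)
  moreover have "E e \<beta> = \<beta>" using EA' b .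
  ultimately show ?thesis using CB_iff[of "[e,a]" \<beta>] CA_plus a b plusA_B by (auto simp: plus_def)
qed

lemma f_iv: "\<alpha> \<in> plus A \<Longrightarrow> \<beta> \<in> plus A \<Longrightarrow> (\<alpha>@[e],\<beta>) \<in> CB \<longleftrightarrow> (\<alpha>,\<beta>) \<in> CA"
proof -
  assume a: "\<alpha> \<in> plus A" and b: "\<beta> \<in> plus A"
  have "E e (\<alpha>@[e]) = \<alpha>" using EA'[OF a] by (simp add: E_def)
  moreover have "E e \<beta> = \<beta>" using EA' b .
  ultimately show ?thesis using CB_iff[of "\<alpha>@[e]" \<beta>] CA_plus a b plusA_B by (auto simp: plus_def)
qed

lemma f_v: "([e,e],[e]) \<in> CB" using cong_gen_R[of R' B] by auto
lemma f_e: "([e],[e]) \<in> CB" using congD(2)[OF CB, of "[e]"] by (auto simp: plus_def)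

end

theorem mainTheorem2:
  fixes A :: "'a set" and R :: "('a list \<times> 'a list) set" and L :: "'a list set" and e :: 'a
  assumes "finite A"
    and "R \<subseteq> plus A \<times> plus A"
    and "prefix_automatic_structure A R L"
    and "e \<notin> A"
  shows "prefix_automatic_structure (insert e A)
           (R \<union> {([e, a], [a]) | a. a \<in> A} \<union> {([a, e], [a]) | a. a \<in> A} \<union> {([e, e], [e])})
           (insert [e] L)"
proof -
  interpret setting A R e using assms(2,4) by unfold_locales
  let ?K = "insert [e] L"
  have fin: "finite A" and LA: "L \<subseteq> plus A" and regL: "regular L"
    and surj: "\<forall>w\<in>plus A. \<exists>u\<in>L. (u, w) \<in> CA"
    and regEq: "regular {conv \<alpha> \<beta> | \<alpha> \<beta>. \<alpha> \<in> L \<and> \<beta> \<in> L \<and> (\<alpha>, \<beta>) \<in> CA}"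
    and regLa: "\<forall>a\<in>A. regular {conv \<alpha> \<beta> | \<alpha> \<beta>. \<alpha> \<in> L \<and> \<beta> \<in> L \<and> (\<alpha> @ [a], \<beta>) \<in> CA}"
    and regP: "regular {conv \<alpha> \<beta> | \<alpha> \<beta>. \<alpha> \<in> L \<and> \<beta> \<in> Pref L \<and> (\<alpha>, \<beta>) \<in> CA}"
    using assms(3) unfolding prefix_automatic_structure_def automatic_structure_def by auto
  have Llists: "\<alpha> \<in> L \<Longrightarrow> \<alpha> \<in> lists A" for \<alpha> using LA by (auto simp: plus_def)
  have LP: "\<alpha> \<in> L \<Longrightarrow> \<alpha> \<in> plus A" for \<alpha> using LA by auto
  have PrefA: "\<beta> \<in> Pref L \<Longrightarrow> \<beta> \<in> lists A" for \<beta> using LA by (auto simp: Pref_def plus_def)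
  have i: "\<alpha> \<in> L \<Longrightarrow> \<beta> \<in> L \<Longrightarrow> (\<alpha>,\<beta>) \<in> CB \<longleftrightarrow> (\<alpha>,\<beta>) \<in> CA" for \<alpha> \<beta>
    using f_i LP by blast
  have ii1: "\<beta> \<in> L \<Longrightarrow> ([e],\<beta>) \<notin> CB" and ii2: "\<beta> \<in> L \<Longrightarrow> (\<beta>,[e]) \<notin> CB" for \<beta>
    using f_ii Llists by blast+
  have 1: "finite B" using fin by simp
  have 2: "?K \<subseteq> plus B" using LA plusA_B by (auto simp: plus_def)
  have 3: "regular ?K" using reg_insert[OF regL] .
  have 4: "\<forall>w\<in>plus B. \<exists>u\<in>?K. (u, w) \<in> CB"
  proof
    fix w assume w: "w \<in> plus B"
    show "\<exists>u\<in>?K. (u, w) \<in> CB"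
    proof (cases "E e w = []")
      case True
      then show ?thesis using to_e[OF w] congD(3)[OF CB] by blast
    next
      case False
      then have "E e w \<in> plus A" using E_lists[of w e A] w by (auto simp: plus_def)
      then obtain u where u: "u \<in> L" "(u, E e w) \<in> CA" using surj by blast
      then have "(u, E e w) \<in> CB" using CA_CB by blast
      moreover have "(E e w, w) \<in> CB" using to_E[OF w False] congD(3)[OF CB] by blast
      ultimately show ?thesis using u(1) congD(4)[OF CB] by blast
    qed
  qed
  have eqB: "{conv \<alpha> \<beta> | \<alpha> \<beta>. \<alpha> \<in> ?K \<and> \<beta> \<in> ?K \<and> (\<alpha>, \<beta>) \<in> CB}
     = insert (conv [e] [e]) {conv \<alpha> \<beta> | \<alpha> \<beta>. \<alpha> \<in> L \<and> \<beta> \<in> L \<and> (\<alpha>, \<beta>) \<in> CA}"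
    using i ii1 ii2 f_e by auto
  have 5: "regular {conv \<alpha> \<beta> | \<alpha> \<beta>. \<alpha> \<in> ?K \<and> \<beta> \<in> ?K \<and> (\<alpha>, \<beta>) \<in> CB}"
    unfolding eqB by (rule reg_insert[OF regEq])
  have 6: "\<forall>a\<in>B. regular {conv \<alpha> \<beta> | \<alpha> \<beta>. \<alpha> \<in> ?K \<and> \<beta> \<in> ?K \<and> (\<alpha> @ [a], \<beta>) \<in> CB}"
  proof
    fix a assume aB: "a \<in> B"
    show "regular {conv \<alpha> \<beta> | \<alpha> \<beta>. \<alpha> \<in> ?K \<and> \<beta> \<in> ?K \<and> (\<alpha> @ [a], \<beta>) \<in> CB}"
    proof (cases "a = e")
      case True
      have iv: "\<alpha> \<in> L \<Longrightarrow> \<beta> \<in> L \<Longrightarrow> (\<alpha>@[e],\<beta>) \<in> CB \<longleftrightarrow> (\<alpha>,\<beta>) \<in> CA" for \<alpha> \<beta>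
        using f_iv LP by blast
      have iv2: "\<alpha> \<in> L \<Longrightarrow> (\<alpha>@[e],[e]) \<notin> CB" for \<alpha>
      proof
        assume a: "\<alpha> \<in> L" and c: "(\<alpha>@[e],[e]) \<in> CB"
        have "E e (\<alpha>@[e]) = \<alpha>" "E e [e] = []" using EA'[OF LP[OF a]] by (auto simp: E_def)
        moreover have "\<alpha> \<noteq> []" using LP[OF a] by (auto simp: plus_def)
        ultimately show False using c CB_iff[of "\<alpha>@[e]" "[e]"] CA_plus by (auto simp: plus_def)
      qed
      have iv3: "\<beta> \<in> L \<Longrightarrow> ([e,e],\<beta>) \<notin> CB" for \<beta>
      proof
        assume b: "\<beta> \<in> L" and c: "([e,e],\<beta>) \<in> CB"
        have "E e [e,e] = []" "E e \<beta> = \<beta>" using EA'[OF LP[OF b]] by (auto simp: E_def)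
        moreover have "\<beta> \<noteq> []" using LP[OF b] by (auto simp: plus_def)
        ultimately show False using c CB_iff[of "[e,e]" \<beta>] CA_plus by (auto simp: plus_def)
      qed
      have "{conv \<alpha> \<beta> | \<alpha> \<beta>. \<alpha> \<in> ?K \<and> \<beta> \<in> ?K \<and> (\<alpha> @ [a], \<beta>) \<in> CB}
        = insert (conv [e] [e]) {conv \<alpha> \<beta> | \<alpha> \<beta>. \<alpha> \<in> L \<and> \<beta> \<in> L \<and> (\<alpha>, \<beta>) \<in> CA}"
      proof -
        have "conv [e] [e] \<in> {conv \<alpha> \<beta> | \<alpha> \<beta>. \<alpha> \<in> ?K \<and> \<beta> \<in> ?K \<and> (\<alpha> @ [a], \<beta>) \<in> CB}"
          using True f_v by force
        then show ?thesis using True iv iv2 iv3 by auto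
      qed
      then show ?thesis by (simp only:) (rule reg_insert[OF regEq])
    next
      case False
      then have a: "a \<in> A" using aB by simp
      have aP: "[a] \<in> plus A" using a by (simp add: plus_def)
      then obtain \<alpha>0 where a0: "\<alpha>0 \<in> L" "(\<alpha>0, [a]) \<in> CA" using surj by blast
      let ?T = "{\<beta>. conv \<alpha>0 \<beta> \<in> {conv \<alpha> \<beta> | \<alpha> \<beta>. \<alpha> \<in> L \<and> \<beta> \<in> L \<and> (\<alpha>, \<beta>) \<in> CA}}"
      have T: "?T = {\<beta>. \<beta> \<in> L \<and> ([a], \<beta>) \<in> CA}"
      proof -
        have "(\<alpha>0, \<beta>) \<in> CA \<longleftrightarrow> ([a], \<beta>) \<in> CA" for \<beta>
          using a0(2) congD(3,4)[OF CA] by blast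
        then show ?thesis using a0(1) by (auto dest: conv_inj)
      qed
      have regT: "regular ?T" by (rule reg_fixfst[OF regEq])
      have vi: "\<alpha> \<in> L \<Longrightarrow> \<beta> \<in> L \<Longrightarrow> (\<alpha>@[a],\<beta>) \<in> CB \<longleftrightarrow> (\<alpha>@[a],\<beta>) \<in> CA" for \<alpha> \<beta>
        using f_i[of "\<alpha>@[a]" \<beta>] LP a by (auto simp: plus_def)
      have vi2: "\<alpha> \<in> L \<Longrightarrow> (\<alpha>@[a],[e]) \<notin> CB" for \<alpha>
        using f_ii[of "\<alpha>@[a]"] Llists a by auto
      have iii: "\<beta> \<in> L \<Longrightarrow> ([e,a],\<beta>) \<in> CB \<longleftrightarrow> ([a],\<beta>) \<in> CA" for \<beta>
        using f_iii[OF a] LP by blast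
      have iii2: "([e,a],[e]) \<notin> CB"
        using CB_iff[of "[e,a]" "[e]"] a eA CA_plus by (auto simp: E_def plus_def)
      have eqa: "{conv \<alpha> \<beta> | \<alpha> \<beta>. \<alpha> \<in> ?K \<and> \<beta> \<in> ?K \<and> (\<alpha> @ [a], \<beta>) \<in> CB}
        = {conv \<alpha> \<beta> | \<alpha> \<beta>. \<alpha> \<in> L \<and> \<beta> \<in> L \<and> (\<alpha> @ [a], \<beta>) \<in> CA} \<union> {conv [e] \<beta> | \<beta>. \<beta> \<in> ?T}"
      proof -
        have w: "conv [e] \<beta> \<in> {conv \<alpha> \<beta> | \<alpha> \<beta>. \<alpha> \<in> ?K \<and> \<beta> \<in> ?K \<and> (\<alpha> @ [a], \<beta>) \<in> CB}"
          if "\<beta> \<in> L" "([a],\<beta>) \<in> CA" for \<beta>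
          using that iii[of \<beta>] by (intro CollectI exI[of _ "[e]"] exI[of _ \<beta>]) auto
        show ?thesis unfolding T using vi vi2 iii iii2 w by auto
      qed
      have r2: "regular {conv [e] \<beta> | \<beta>. \<beta> \<in> ?T}"
        by (rule reg_conv_e[OF regT fin]) (use LA T in auto)
      have r1: "regular {conv \<alpha> \<beta> | \<alpha> \<beta>. \<alpha> \<in> L \<and> \<beta> \<in> L \<and> (\<alpha> @ [a], \<beta>) \<in> CA}"
        using regLa a by blast
      show ?thesis unfolding eqa by (rule reg_Un[OF r1 r2])
    qed
  qed
  have PK: "Pref ?K = insert [] (insert [e] (Pref L))"
  proof (intro set_eqI iffI)
    fix u assume "u \<in> Pref ?K"
    then obtain v where "u @ v = [e] \<or> u @ v \<in> L" by (auto simp: Pref_def)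
    then show "u \<in> insert [] (insert [e] (Pref L))"
      by (auto simp: Pref_def append_eq_Cons_conv)
  next
    fix u assume "u \<in> insert [] (insert [e] (Pref L))"
    then show "u \<in> Pref ?K" by (auto simp: Pref_def)
  qed
  have nil1: "(\<alpha>, []) \<notin> CB" for \<alpha> using CB_iff[of \<alpha> "[]"] by (auto simp: plus_def)
  have p1: "\<alpha> \<in> L \<Longrightarrow> \<beta> \<in> Pref L \<Longrightarrow> (\<alpha>,\<beta>) \<in> CB \<longleftrightarrow> (\<alpha>,\<beta>) \<in> CA" for \<alpha> \<beta>
  proof -
    assume a: "\<alpha> \<in> L" and b: "\<beta> \<in> Pref L"
    show ?thesis
    proof (cases "\<beta> = []")
      case True then show ?thesis using nil1 CA_plus by (auto simp: plus_def)
    next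
      case False then have "\<beta> \<in> plus A" using PrefA[OF b] by (simp add: plus_def)
      then show ?thesis using f_i LP[OF a] by blast
    qed
  qed
  have p2: "\<beta> \<in> Pref L \<Longrightarrow> ([e],\<beta>) \<notin> CB" for \<beta> using f_ii PrefA by blast
  have eqP: "{conv \<alpha> \<beta> | \<alpha> \<beta>. \<alpha> \<in> ?K \<and> \<beta> \<in> Pref ?K \<and> (\<alpha>, \<beta>) \<in> CB}
     = insert (conv [e] [e]) {conv \<alpha> \<beta> | \<alpha> \<beta>. \<alpha> \<in> L \<and> \<beta> \<in> Pref L \<and> (\<alpha>, \<beta>) \<in> CA}"
    unfolding PK using p1 p2 nil1 ii2 f_e by auto
  have 7: "regular {conv \<alpha> \<beta> | \<alpha> \<beta>. \<alpha> \<in> ?K \<and> \<beta> \<in> Pref ?K \<and> (\<alpha>, \<beta>) \<in> CB}"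
    unfolding eqP by (rule reg_insert[OF regP])
  show ?thesis
    unfolding prefix_automatic_structure_def automatic_structure_def
    by (intro conjI; (rule 1 | rule 2 | rule 3 | rule 4 | rule 5 | rule 6 | rule 7))
qed

end
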